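(* The set $\mathcal C=(0,\infty)\times\mathbb R$ is an invariant control set for the system (N).
   Context: Fix $\delta\in\mathbb R$, $\gamma>0$, $D>0$. System (N): $d\xi=-\xi^4\eta\,dt$, $d\eta=(\delta\xi+2\xi^3\eta^2-\gamma\xi^4\eta)dt+\sqrt{2D}\,dW$. Associated control problem: $\dot z_1=-z_1^4z_2$, $\dot z_2=\delta z_1+2z_1^3z_2^2-\gamma z_1^4z_2+\sqrt{2D}\,u(t)$ with smooth admissible controls $u:[0,\infty)\to\mathbb R$. For $(\xi,\eta)\in\mathbb R^2$ and $T>0$, $\mathcal O(T,\xi,\eta)$ is the set of points $(z_1(T),z_2(T))$ reachable at time $T$ by a solution of the control problem starting from $(\xi,\eta)$, and $\mathcal O(\xi,\eta)=\bigcup_{T>0}\mathcal O(T,\xi,\eta)$. A nonempty set $\mathcal C\subset\mathbb R^2$ is an invariant control set for (N) if $\overline{\mathcal C}=\overline{\mathcal O(\xi,\eta)}$ for all $(\xi,\eta)\in\mathcal C$ and $\mathcal C$ is maximal with respect to inclusion among sets with this property. *)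

theory Defs
  imports "HOL-Analysis.Analysis"
begin

definition smooth_on_real :: "real set \<Rightarrow> (real \<Rightarrow> real) \<Rightarrow> bool" where
  "smooth_on_real S u \<longleftrightarrow>
     (\<exists>Df :: nat \<Rightarrow> real \<Rightarrow> real. Df 0 = u \<and>
        (\<forall>k. \<forall>t\<in>S. (Df k has_real_derivative Df (Suc k) t) (at t within S)))"

definition admissible_control :: "(real \<Rightarrow> real) \<Rightarrow> bool" where
  "admissible_control u \<longleftrightarrow> smooth_on_real {0..} u"

definition ctrl_solution ::
  "real \<Rightarrow> real \<Rightarrow> real \<Rightarrow> (real \<Rightarrow> real) \<Rightarrow> real \<Rightarrow> (real \<Rightarrow> real \<times> real) \<Rightarrow> bool" where
  "ctrl_solution \<delta> \<gamma> D u T z \<longleftrightarrow>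
     (\<forall>t\<in>{0..T}.
        ((\<lambda>s. fst (z s)) has_real_derivative
            (- (fst (z t) ^ 4 * snd (z t)))) (at t within {0..T}) \<and>
        ((\<lambda>s. snd (z s)) has_real_derivative
            (\<delta> * fst (z t) + 2 * (fst (z t)) ^ 3 * (snd (z t)) ^ 2
             - \<gamma> * (fst (z t)) ^ 4 * snd (z t) + sqrt (2 * D) * u t)) (at t within {0..T}))"

definition reach_time :: "real \<Rightarrow> real \<Rightarrow> real \<Rightarrow> real \<Rightarrow> real \<times> real \<Rightarrow> (real \<times> real) set" where
  "reach_time \<delta> \<gamma> D T p =
     {z T | z u. admissible_control u \<and> z 0 = p \<and> ctrl_solution \<delta> \<gamma> D u T z}"

definition reach :: "real \<Rightarrow> real \<Rightarrow> real \<Rightarrow> real \<times> real \<Rightarrow> (real \<times> real) set" where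
  "reach \<delta> \<gamma> D p = (\<Union>T\<in>{0<..}. reach_time \<delta> \<gamma> D T p)"

definition control_set_property :: "real \<Rightarrow> real \<Rightarrow> real \<Rightarrow> (real \<times> real) set \<Rightarrow> bool" where
  "control_set_property \<delta> \<gamma> D C \<longleftrightarrow>
     C \<noteq> {} \<and> (\<forall>p\<in>C. closure C = closure (reach \<delta> \<gamma> D p))"

definition invariant_control_set :: "real \<Rightarrow> real \<Rightarrow> real \<Rightarrow> (real \<times> real) set \<Rightarrow> bool" where
  "invariant_control_set \<delta> \<gamma> D C \<longleftrightarrow>
     control_set_property \<delta> \<gamma> D C \<and>
     (\<forall>C'. C \<subseteq> C' \<and> control_set_property \<delta> \<gamma> D C' \<longrightarrow> C' = C)"

end

theory Submission
  imports Defs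
begin


lemma sign_pres:
  assumes sol: "ctrl_solution \<delta> \<gamma> D u T z" and T: "T \<ge> 0"
  shows "\<exists>k. fst (z T) = fst (z 0) * exp k"
proof -
  define x where "x = (\<lambda>s. fst (z s))"
  define y where "y = (\<lambda>s. snd (z s))"
  have dx: "\<And>t. t \<in> {0..T} \<Longrightarrow> (x has_real_derivative -(x t^4 * y t)) (at t within {0..T})"
    using sol unfolding ctrl_solution_def x_def y_def by blast
  have dy: "\<And>t. t \<in> {0..T} \<Longrightarrow> \<exists>d. (y has_real_derivative d) (at t within {0..T})"
    using sol unfolding ctrl_solution_def x_def y_def by blast
  have cx: "continuous_on {0..T} x"
    using dx DERIV_continuous continuous_on_eq_continuous_within by blast
  have cy: "continuous_on {0..T} y"
    using dy DERIV_continuous continuous_on_eq_continuous_within by blast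
  define a where "a = (\<lambda>t. -(x t^3 * y t))"
  have ca: "continuous_on {0..T} a" unfolding a_def
    by (intro continuous_intros cx cy)
  define A where "A = (\<lambda>t. integral {0..t} a)"
  have dA: "\<And>t. t \<in> {0..T} \<Longrightarrow> (A has_real_derivative a t) (at t within {0..T})"
    unfolding A_def using integral_has_real_derivative[OF ca] by blast
  define g where "g = (\<lambda>t. x t * exp (- A t))"
  have dg: "\<And>t. t \<in> {0..T} \<Longrightarrow> (g has_real_derivative 0) (at t within {0..T})"
  proof -
    fix t assume t: "t \<in> {0..T}"
    have e: "((\<lambda>s. exp (- A s)) has_real_derivative exp (- A t) * (- a t)) (at t within {0..T})"
      using dA[OF t] by (auto intro!: derivative_eq_intros)
    have "(g has_real_derivative (-(x t^4 * y t)) * exp (- A t) + (exp (- A t) * (- a t)) * x t) (at t within {0..T})"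
      unfolding g_def using DERIV_mult[OF dx[OF t] e] .
    moreover have "(-(x t^4 * y t)) * exp (- A t) + (exp (- A t) * (- a t)) * x t = 0"
      unfolding a_def by (simp add: algebra_simps power_numeral_reduce)
    ultimately show "(g has_real_derivative 0) (at t within {0..T})" by simp
  qed
  obtain c where c: "\<forall>t\<in>{0..T}. g t = c"
    using has_field_derivative_zero_constant[of "{0..T}" g] dg by auto
  have "g T = g 0" using c T by auto
  moreover have "A 0 = 0" unfolding A_def by simp
  ultimately have "x T * exp (- A T) = x 0" unfolding g_def by simp
  hence "x T = x 0 * exp (A T)"
    by (metis exp_minus_inverse mult.assoc mult.right_neutral)
  thus ?thesis unfolding x_def by blast
qed



inductive_set FF :: "(real \<Rightarrow> real) set" where
  cst: "(\<lambda>t. c) \<in> FF"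
| idt: "(\<lambda>t. t) \<in> FF"
| add: "f \<in> FF \<Longrightarrow> g \<in> FF \<Longrightarrow> (\<lambda>t. f t + g t) \<in> FF"
| sub: "f \<in> FF \<Longrightarrow> g \<in> FF \<Longrightarrow> (\<lambda>t. f t - g t) \<in> FF"
| mul: "f \<in> FF \<Longrightarrow> g \<in> FF \<Longrightarrow> (\<lambda>t. f t * g t) \<in> FF"
| neg: "f \<in> FF \<Longrightarrow> (\<lambda>t. - f t) \<in> FF"
| dvc: "f \<in> FF \<Longrightarrow> (\<lambda>t. f t / c) \<in> FF"
| pw: "f \<in> FF \<Longrightarrow> (\<lambda>t. f t ^ n) \<in> FF"
| ex: "f \<in> FF \<Longrightarrow> (\<lambda>t. exp (f t)) \<in> FF"

lemma FF_deriv: "f \<in> FF \<Longrightarrow> \<exists>f'\<in>FF. \<forall>t. (f has_real_derivative f' t) (at t)"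
proof (induction rule: FF.induct)
  case (cst c)
  have "(\<lambda>t. 0::real) \<in> FF" by (rule FF.cst)
  moreover have "\<forall>t. ((\<lambda>t. c) has_real_derivative 0) (at t)" by simp
  ultimately show ?case by (intro bexI[of _ "(\<lambda>t. 0::real)"])
next
  case idt
  have "(\<lambda>t. 1::real) \<in> FF" by (rule FF.cst)
  moreover have "\<forall>t. ((\<lambda>t. t) has_real_derivative 1) (at t)" by simp
  ultimately show ?case by (intro bexI[of _ "(\<lambda>t. 1::real)"])
next
  case (add f g) then obtain f' g' where h: "f' \<in> FF" "g' \<in> FF" "\<forall>t. (f has_real_derivative f' t) (at t)"
    "\<forall>t. (g has_real_derivative g' t) (at t)" by blast
  have "(\<lambda>t. f' t + g' t) \<in> FF" using h by (intro FF.add)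
  moreover have "\<forall>t. ((\<lambda>t. f t + g t) has_real_derivative f' t + g' t) (at t)"
    using h by (intro allI DERIV_add) blast+
  ultimately show ?case by (intro bexI[of _ "(\<lambda>t. f' t + g' t)"])
next
  case (sub f g) then obtain f' g' where h: "f' \<in> FF" "g' \<in> FF" "\<forall>t. (f has_real_derivative f' t) (at t)"
    "\<forall>t. (g has_real_derivative g' t) (at t)" by blast
  have "(\<lambda>t. f' t - g' t) \<in> FF" using h by (intro FF.sub)
  moreover have "\<forall>t. ((\<lambda>t. f t - g t) has_real_derivative f' t - g' t) (at t)"
    using h by (intro allI DERIV_diff) blast+
  ultimately show ?case by (intro bexI[of _ "(\<lambda>t. f' t - g' t)"])
next
  case (mul f g) then obtain f' g' where h: "f' \<in> FF" "g' \<in> FF" "\<forall>t. (f has_real_derivative f' t) (at t)"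
    "\<forall>t. (g has_real_derivative g' t) (at t)" by blast
  have "(\<lambda>t. f' t * g t + g' t * f t) \<in> FF" using h mul.hyps by (intro FF.add FF.mul)
  moreover have "\<forall>t. ((\<lambda>t. f t * g t) has_real_derivative f' t * g t + g' t * f t) (at t)"
    using h by (intro allI DERIV_mult) blast+
  ultimately show ?case by (intro bexI[of _ "(\<lambda>t. f' t * g t + g' t * f t)"])
next
  case (neg f) then obtain f' where h: "f' \<in> FF" "\<forall>t. (f has_real_derivative f' t) (at t)" by blast
  have "(\<lambda>t. - f' t) \<in> FF" using h by (intro FF.neg)
  moreover have "\<forall>t. ((\<lambda>t. - f t) has_real_derivative - f' t) (at t)"
    using h by (intro allI DERIV_minus) blast+
  ultimately show ?case by (intro bexI[of _ "(\<lambda>t. - f' t)"])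
next
  case (dvc f c) then obtain f' where h: "f' \<in> FF" "\<forall>t. (f has_real_derivative f' t) (at t)" by blast
  have "(\<lambda>t. f' t / c) \<in> FF" using h by (intro FF.dvc)
  moreover have "\<forall>t. ((\<lambda>t. f t / c) has_real_derivative f' t / c) (at t)"
    using h by (intro allI DERIV_cdivide) blast+
  ultimately show ?case by (intro bexI[of _ "(\<lambda>t. f' t / c)"])
next
  case (pw f n) then obtain f' where f': "f' \<in> FF" "\<forall>t. (f has_real_derivative f' t) (at t)" by blast
  have "(\<lambda>t. of_nat n * (f' t * f t ^ (n - Suc 0))) \<in> FF"
    using f' pw.hyps by (intro FF.mul FF.cst FF.pw)
  moreover have "\<forall>t. ((\<lambda>t. f t ^ n) has_real_derivative of_nat n * (f' t * f t ^ (n - Suc 0))) (at t)"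
    using f' by (intro allI DERIV_power) blast
  ultimately show ?case by (intro bexI[of _ "(\<lambda>t. of_nat n * (f' t * f t ^ (n - Suc 0)))"])
next
  case (ex f) then obtain f' where f': "f' \<in> FF" "\<forall>t. (f has_real_derivative f' t) (at t)" by blast
  have "(\<lambda>t. exp (f t) * f' t) \<in> FF"
    using f' ex.hyps by (intro FF.mul FF.ex)
  moreover have "\<forall>t. ((\<lambda>t. exp (f t)) has_real_derivative exp (f t) * f' t) (at t)"
    using f' by (intro allI DERIV_fun_exp) blast
  ultimately show ?case by (intro bexI[of _ "(\<lambda>t. exp (f t) * f' t)"])
qed

lemma FF_smooth: assumes "f \<in> FF" shows "smooth_on_real S f"
proof -
  define nx where "nx = (\<lambda>g. SOME g'. g' \<in> FF \<and> (\<forall>t. (g has_real_derivative g' t) (at t)))"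
  have nx: "nx g \<in> FF \<and> (\<forall>t. (g has_real_derivative nx g t) (at t))" if "g \<in> FF" for g
  proof -
    have "\<exists>g'. g' \<in> FF \<and> (\<forall>t. (g has_real_derivative g' t) (at t))"
      using FF_deriv[OF that] unfolding Bex_def .
    hence "(SOME g'. g' \<in> FF \<and> (\<forall>t. (g has_real_derivative g' t) (at t))) \<in> FF \<and>
       (\<forall>t. (g has_real_derivative (SOME g'. g' \<in> FF \<and> (\<forall>t. (g has_real_derivative g' t) (at t))) t) (at t))"
      by (rule someI_ex)
    thus ?thesis unfolding nx_def .
  qed
  define Df where "Df = (\<lambda>k. (nx ^^ k) f)"
  have DfS: "Df (Suc k) = nx (Df k)" for k unfolding Df_def by simp
  have inF: "Df k \<in> FF" for k
  proof (induction k)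
    case 0 show ?case unfolding Df_def using assms by simp
  next
    case (Suc k) show ?case unfolding DfS using nx[OF Suc.IH] by (rule conjunct1)
  qed
  show ?thesis unfolding smooth_on_real_def
  proof (intro exI[of _ Df] conjI allI ballI)
    show "Df 0 = f" by (simp add: Df_def)
    fix k t
    have "(Df k has_real_derivative Df (Suc k) t) (at t)"
      unfolding DfS using nx[OF inF[of k]] by blast
    thus "(Df k has_real_derivative Df (Suc k) t) (at t within S)"
      by (rule has_field_derivative_at_within)
  qed
qed



lemma exp_pow: "exp (x::real) ^ n = exp (of_nat n * x)"
  by (simp add: exp_of_nat_mult)

lemma reach_pt:
  assumes D: "D > 0" and p1: "p1 > 0" and a: "a > 0"
  shows "(a, b) \<in> reach \<delta> \<gamma> D (p1, p2)"
proof -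
  define kA where "kA = ln p1"
  define kB where "kB = - (p1^3) * p2"
  define r where "r = ln a - kA - kB"
  define s where "s = - (a^3) * b"
  define kE where "kE = (s - kB) - 2 * r"
  define kC where "kC = r - kE"
  define q where "q = (\<lambda>t::real. kA + kB*t + kC*t^2 + kE*t^3)"
  define q1 where "q1 = (\<lambda>t::real. kB + 2*kC*t + 3*kE*t^2)"
  define q2 where "q2 = (\<lambda>t::real. 2*kC + 6*kE*t)"
  define x where "x = (\<lambda>t. exp (q t))"
  define y where "y = (\<lambda>t. - q1 t * exp (- 3 * q t))"
  define y' where "y' = (\<lambda>t. (- q2 t + 3 * q1 t ^ 2) * exp (- 3 * q t))"
  define c where "c = sqrt (2 * D)"
  have c0: "c \<noteq> 0" using D by (simp add: c_def)
  define u where "u = (\<lambda>t. (y' t - \<delta> * x t - 2 * x t ^ 3 * y t ^ 2 + \<gamma> * x t ^ 4 * y t) / c)"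
  define z where "z = (\<lambda>t. (x t, y t))"
  have qd: "(q has_real_derivative q1 t) (at t)" for t
    unfolding q_def q1_def by (auto intro!: derivative_eq_intros simp: algebra_simps)
  have q1d: "(q1 has_real_derivative q2 t) (at t)" for t
    unfolding q2_def q1_def by (auto intro!: derivative_eq_intros simp: algebra_simps)
  have xd: "(x has_real_derivative - (x t ^ 4 * y t)) (at t)" for t
  proof -
    have "(x has_real_derivative exp (q t) * q1 t) (at t)"
      unfolding x_def using qd by (auto intro!: derivative_eq_intros)
    moreover have "exp (q t) * q1 t = - (x t ^ 4 * y t)"
    proof -
      have "exp (q t)^4 * exp (- 3 * q t) = exp (q t)"
        unfolding exp_pow by (simp add: exp_add[symmetric])
      thus ?thesis unfolding x_def y_def by (simp add: algebra_simps)
    qed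
    ultimately show ?thesis by simp
  qed
  have yd: "(y has_real_derivative y' t) (at t)" for t
    unfolding y_def y'_def using qd q1d
    by (auto intro!: derivative_eq_intros simp: algebra_simps power2_eq_square)
  have uF: "u \<in> FF"
    unfolding u_def y'_def x_def y_def q_def q1_def q2_def
    by (intro FF.intros)
  have adm: "admissible_control u"
    unfolding admissible_control_def by (rule FF_smooth[OF uF])
  have sol: "ctrl_solution \<delta> \<gamma> D u 1 z"
    unfolding ctrl_solution_def z_def fst_conv snd_conv
  proof (intro ballI conjI)
    fix t :: real
    show "(x has_real_derivative - (x t ^ 4 * y t)) (at t within {0..1})"
      using xd has_field_derivative_at_within by blast
    have "\<delta> * x t + 2 * x t ^ 3 * y t ^ 2 - \<gamma> * x t ^ 4 * y t + sqrt (2 * D) * u t = y' t"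
      using c0 unfolding u_def c_def[symmetric] by (simp add: field_simps)
    thus "(y has_real_derivative \<delta> * x t + 2 * x t ^ 3 * y t ^ 2 - \<gamma> * x t ^ 4 * y t + sqrt (2 * D) * u t)
          (at t within {0..1})"
      using yd has_field_derivative_at_within by metis
  qed
  have e3: "exp (- 3 * ln v) = 1 / v^3" if "v > 0" for v :: real
  proof -
    have "exp (3 * ln v) = v^3" using exp_of_nat_mult[of 3 "ln v"] that by simp
    thus ?thesis by (simp add: exp_minus field_simps)
  qed
  have z0: "z 0 = (p1, p2)"
    unfolding z_def x_def y_def q_def q1_def using p1 e3[OF p1]
    by (simp add: kA_def kB_def)
  have q1v: "q 1 = ln a" unfolding q_def kC_def r_def by simp
  have q11: "q1 1 = s" unfolding q1_def kC_def kE_def by (simp add: algebra_simps)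
  have z1: "z 1 = (a, b)"
    unfolding z_def x_def y_def q1v q11 using a e3[OF a]
    by (simp add: s_def)
  show ?thesis unfolding reach_def reach_time_def
    using adm z0 sol z1 by (intro UN_I[of 1]) (auto intro!: exI[of _ z] exI[of _ u])
qed



lemma reach_fst:
  assumes "q \<in> reach \<delta> \<gamma> D p" shows "\<exists>k. fst q = fst p * exp k"
proof -
  from assms obtain T z u where T: "T > 0" and q: "q = z T" and "z 0 = p"
    and sol: "ctrl_solution \<delta> \<gamma> D u T z"
    unfolding reach_def reach_time_def by auto
  thus ?thesis using sign_pres[OF sol] T by auto
qed

lemma reach_eq:
  assumes D: "D > 0" and p: "fst p > 0"
  shows "reach \<delta> \<gamma> D p = {0<..} \<times> UNIV"
proof
  show "reach \<delta> \<gamma> D p \<subseteq> {0<..} \<times> UNIV"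
  proof
    fix q assume "q \<in> reach \<delta> \<gamma> D p"
    then obtain k where "fst q = fst p * exp k" using reach_fst by blast
    thus "q \<in> {0<..} \<times> UNIV" using p by (cases q) auto
  qed
  show "{0<..} \<times> UNIV \<subseteq> reach \<delta> \<gamma> D p"
  proof
    fix q :: "real \<times> real" assume "q \<in> {0<..} \<times> UNIV"
    thus "q \<in> reach \<delta> \<gamma> D p" using reach_pt[OF D p, of "fst q" "snd q" \<delta> \<gamma> "snd p"]
      by (cases q) auto
  qed
qed

lemma clC: "closure (({0<..}::real set) \<times> (UNIV::real set)) = {0..} \<times> (UNIV :: real set)"
  by (simp add: closure_Times)

theorem mainTheorem13:
  fixes \<delta> \<gamma> D :: real
  assumes "\<gamma> > 0" and "D > 0"
  shows "invariant_control_set \<delta> \<gamma> D ({0<..} \<times> UNIV)"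
  unfolding invariant_control_set_def control_set_property_def
proof (intro conjI allI impI ballI)
  show "{0<..} \<times> UNIV \<noteq> ({} :: (real \<times> real) set)" by auto
  fix p :: "real \<times> real" assume "p \<in> {0<..} \<times> UNIV"
  then have "fst p > 0" by auto
  then show "closure ({0<..} \<times> UNIV) = closure (reach \<delta> \<gamma> D p)"
    using reach_eq[OF assms(2)] by simp
next
  fix C' :: "(real \<times> real) set"
  assume h: "{0<..} \<times> UNIV \<subseteq> C' \<and> C' \<noteq> {} \<and> (\<forall>p\<in>C'. closure C' = closure (reach \<delta> \<gamma> D p))"
  have o1: "(1::real, 0::real) \<in> {0<..} \<times> UNIV" by simp
  have o: "(1, 0) \<in> C'" using h o1 by blast
  have cl: "closure C' = {0..} \<times> UNIV"
    using h o reach_eq[OF assms(2), of "(1,0)"] clC by auto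
  show "C' = {0<..} \<times> UNIV"
  proof
    show "C' \<subseteq> {0<..} \<times> UNIV"
    proof
      fix p assume pC: "p \<in> C'"
      have "p \<in> closure C'" using pC closure_subset by blast
      hence p0: "fst p \<ge> 0" using cl by auto
      show "p \<in> {0<..} \<times> UNIV"
      proof (rule ccontr)
        assume "p \<notin> {0<..} \<times> UNIV"
        hence pz: "fst p = 0" using p0 by (cases p) auto
        have "reach \<delta> \<gamma> D p \<subseteq> {0} \<times> UNIV"
        proof
          fix q assume "q \<in> reach \<delta> \<gamma> D p"
          then obtain k where "fst q = fst p * exp k" using reach_fst by blast
          thus "q \<in> {0} \<times> UNIV" using pz by (cases q) auto
        qed
        hence "closure (reach \<delta> \<gamma> D p) \<subseteq> {0} \<times> UNIV"
          by (intro closure_minimal) (auto intro: closed_Times)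
        moreover have "(1,0) \<in> closure (reach \<delta> \<gamma> D p)"
          using h pC o closure_subset by blast
        ultimately show False by auto
      qed
    qed
    show "{0<..} \<times> UNIV \<subseteq> C'" using h by blast
  qed
qed

end
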